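(* For every $(A,B,v)\in\mathrm{SU}(2)\times\mathbb{R}$, $$d_1(\mathrm{Id},(A,B,v))=d_2(\mathrm{Id},(Ae^{iv/2},Be^{-iv/2},v)).$$
   Context: $\mathrm{SU}(2)\times\mathbb{R}$ is the group of matrices $(A,B,v)=\begin{pmatrix}A&B&0\\-\overline{B}&\overline{A}&0\\0&0&e^v\end{pmatrix}$, $A,B\in\mathbb{C}$, $|A|^2+|B|^2=1$, $v\in\mathbb{R}$, with identity $\mathrm{Id}$. Let $E_1=\tfrac12(e_{12}-e_{21})$, $E_2=\tfrac{i}{2}(e_{12}+e_{21})$, $E_3=\tfrac{i}{2}(e_{11}-e_{22})$, $E_4=e_{33}$ ($e_{jk}$ the $3\times3$ matrix units). $d_1$ (resp. $d_2$) is the left-invariant sub-Riemannian metric defined by the left-invariant distribution whose value at $\mathrm{Id}$ is $\mathrm{span}(E_1,E_4-E_3,E_2)$ (resp. $\mathrm{span}(E_1,E_4,E_2)$), with the inner product for which these three vectors are orthonormal; the distance is the infimum of lengths of horizontal curves. *)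

theory Defs
  imports "HOL-Analysis.Analysis" "HOL-Library.Numeral_Type"
begin

text \<open>3x3 complex matrices. Indices of type 3 are written 1, 2, 3 (note 3 = 0 in type 3,
  but 1, 2, 3 are three distinct indices).\<close>

type_synonym cmat3 = "complex^3^3"

definition munit :: "3 \<Rightarrow> 3 \<Rightarrow> cmat3" where
  "munit j k = (\<chi> a b. if a = j \<and> b = k then 1 else 0)"

definition csmult :: "complex \<Rightarrow> cmat3 \<Rightarrow> cmat3" where
  "csmult c M = (\<chi> a b. c * M $ a $ b)"

definition grp :: "complex \<Rightarrow> complex \<Rightarrow> real \<Rightarrow> cmat3" where
  "grp A B v = csmult A (munit 1 1) + csmult B (munit 1 2) - csmult (cnj B) (munit 2 1)
              + csmult (cnj A) (munit 2 2) + csmult (of_real (exp v)) (munit 3 3)"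

definition E1 :: cmat3 where "E1 = csmult (1/2) (munit 1 2 - munit 2 1)"
definition E2 :: cmat3 where "E2 = csmult (\<i>/2) (munit 1 2 + munit 2 1)"
definition E3 :: cmat3 where "E3 = csmult (\<i>/2) (munit 1 1 - munit 2 2)"
definition E4 :: cmat3 where "E4 = munit 3 3"

definition Idm :: cmat3 where "Idm = mat 1"

text \<open>Horizontal curve for the left-invariant distribution spanned (at Id) by X1, X2, X3,
  parametrised on [0,1]: gamma is absolutely continuous with
  gamma' = gamma (u1 X1 + u2 X2 + u3 X3) a.e., controls u_i in L^1, i.e.
  gamma t - gamma 0 = integral_0^t gamma(s) (sum u_i(s) X_i) ds.\<close>
definition horizontal ::
  "cmat3 \<Rightarrow> cmat3 \<Rightarrow> cmat3 \<Rightarrow> (real \<Rightarrow> cmat3) \<Rightarrow> (real \<Rightarrow> real) \<Rightarrow> (real \<Rightarrow> real) \<Rightarrow> (real \<Rightarrow> real) \<Rightarrow> bool" where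
  "horizontal X1 X2 X3 \<gamma> u1 u2 u3 \<longleftrightarrow>
     u1 absolutely_integrable_on {0..1} \<and> u2 absolutely_integrable_on {0..1} \<and>
     u3 absolutely_integrable_on {0..1} \<and>
     (\<forall>t\<in>{0..1}. ((\<lambda>s. \<gamma> s ** (csmult (of_real (u1 s)) X1 + csmult (of_real (u2 s)) X2
                                  + csmult (of_real (u3 s)) X3)) has_integral (\<gamma> t - \<gamma> 0)) {0..t})"

text \<open>Sub-Riemannian length: X1, X2, X3 orthonormal.\<close>
definition sr_length :: "(real \<Rightarrow> real) \<Rightarrow> (real \<Rightarrow> real) \<Rightarrow> (real \<Rightarrow> real) \<Rightarrow> real" where
  "sr_length u1 u2 u3 = integral {0..1} (\<lambda>t. sqrt ((u1 t)\<^sup>2 + (u2 t)\<^sup>2 + (u3 t)\<^sup>2))"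

definition sr_dist :: "cmat3 \<Rightarrow> cmat3 \<Rightarrow> cmat3 \<Rightarrow> cmat3 \<Rightarrow> cmat3 \<Rightarrow> real" where
  "sr_dist X1 X2 X3 p q = Inf {sr_length u1 u2 u3 | \<gamma> u1 u2 u3.
       horizontal X1 X2 X3 \<gamma> u1 u2 u3 \<and> \<gamma> 0 = p \<and> \<gamma> 1 = q}"

definition d1 :: "cmat3 \<Rightarrow> cmat3 \<Rightarrow> real" where "d1 = sr_dist E1 (E4 - E3) E2"
definition d2 :: "cmat3 \<Rightarrow> cmat3 \<Rightarrow> real" where "d2 = sr_dist E1 E4 E2"

end

theory Submission
  imports Defs
begin

lemma sigma_finite_lebesgue: "sigma_finite_measure (lebesgue :: real measure)"
proof
  show "\<exists>A. countable A \<and> A \<subseteq> sets (lebesgue::real measure) \<and> \<Union> A = space lebesgue \<and> (\<forall>a\<in>A. emeasure lebesgue a \<noteq> \<infinity>)"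
  proof (intro exI conjI)
    show "countable (range (\<lambda>n::nat. {- real n..real n}))" by simp
    show "range (\<lambda>n::nat. {- real n..real n}) \<subseteq> sets lebesgue" by auto
    show "\<Union> (range (\<lambda>n::nat. {- real n..real n})) = space lebesgue"
      by (auto simp: real_arch_simple) (metis abs_le_D1 abs_le_D2 minus_le_iff real_arch_simple)
    show "\<forall>a\<in>range (\<lambda>n::nat. {- real n..real n}). emeasure lebesgue a \<noteq> \<infinity>" by auto
  qed
qed

lemma id_borel_lebesgue[measurable]: "(\<lambda>x::real. x) \<in> borel_measurable lebesgue"
  by (rule measurable_completion) simp

lemma prod_core:
  fixes f g :: "real \<Rightarrow> real" and t :: real
  assumes f: "f absolutely_integrable_on {0..t}" and g: "g absolutely_integrable_on {0..t}"
  shows "((\<lambda>s. f s * integral {0..s} g + integral {0..s} f * g s) has_integral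
           (integral {0..t} f * integral {0..t} g)) {0..t}"
proof -
  interpret L: sigma_finite_measure "lebesgue::real measure" by (rule sigma_finite_lebesgue)
  interpret P: pair_sigma_finite "lebesgue::real measure" "lebesgue::real measure" 
    by unfold_locales
  define F1 where "F1 = (\<lambda>s. indicator {0..t} s * f s)"
  define G1 where "G1 = (\<lambda>s. indicator {0..t} s * g s)"
  have iF: "integrable lebesgue F1" using f
    by (simp add: F1_def absolutely_integrable_on_def set_integrable_def)
  have iG: "integrable lebesgue G1" using g
    by (simp add: G1_def absolutely_integrable_on_def set_integrable_def)
  have mF[measurable]: "F1 \<in> borel_measurable lebesgue" using iF by auto
  have mG[measurable]: "G1 \<in> borel_measurable lebesgue" using iG by auto
  define K where "K s r = F1 s * G1 r" for s r
  define P where "P s r = F1 s * G1 r * (if r \<le> s then 1 else 0::real)" for s r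
  define Q where "Q s r = F1 s * G1 r * (if r \<le> s then 0 else 1::real)" for s r
  have mK: "(\<lambda>(s,r). K s r) \<in> borel_measurable (lebesgue \<Otimes>\<^sub>M lebesgue)"
    unfolding K_def by measurable
  have mP: "(\<lambda>(s,r). P s r) \<in> borel_measurable (lebesgue \<Otimes>\<^sub>M lebesgue)"
    unfolding P_def by measurable
  have mQ: "(\<lambda>(s,r). Q s r) \<in> borel_measurable (lebesgue \<Otimes>\<^sub>M lebesgue)"
    unfolding Q_def by measurable
  have iK: "integrable (lebesgue \<Otimes>\<^sub>M lebesgue) (\<lambda>(s,r). K s r)"
  proof (rule P.Fubini_integrable[OF mK])
    show "integrable lebesgue (\<lambda>x. \<integral>y. norm (case (x, y) of (s, r) \<Rightarrow> K s r) \<partial>lebesgue)"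
      using iF iG by (simp add: K_def abs_mult)
    show "AE x in lebesgue. integrable lebesgue (\<lambda>y. case (x, y) of (s, r) \<Rightarrow> K s r)"
      using iG by (simp add: K_def)
  qed
  have iP: "integrable (lebesgue \<Otimes>\<^sub>M lebesgue) (\<lambda>(s,r). P s r)"
    by (rule Bochner_Integration.integrable_bound[OF iK mP], intro AE_I2, clarsimp simp: P_def K_def abs_mult)
  have iQ: "integrable (lebesgue \<Otimes>\<^sub>M lebesgue) (\<lambda>(s,r). Q s r)"
    by (rule Bochner_Integration.integrable_bound[OF iK mQ], intro AE_I2, clarsimp simp: Q_def K_def abs_mult)
  have e1: "(\<integral>r. P s r \<partial>lebesgue) = F1 s * integral {0..s} g" for s
  proof (cases "s \<in> {0..t}")
    case True
    have "(\<integral>r. P s r \<partial>lebesgue) = (\<integral>r. F1 s * (indicator {0..s} r *\<^sub>R g r) \<partial>lebesgue)"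
      unfolding P_def using True
      by (intro Bochner_Integration.integral_cong) (auto simp: G1_def indicator_def)
    also have "\<dots> = F1 s * (\<integral>r. indicator {0..s} r *\<^sub>R g r \<partial>lebesgue)"
      by (rule integral_mult_right_zero)
    also have "(\<integral>r. indicator {0..s} r *\<^sub>R g r \<partial>lebesgue) = integral {0..s} g"
    proof -
      have "set_integrable lebesgue {0..s} g"
        using set_integrable_subset[of lebesgue "{0..t}" g "{0..s}"] g True by auto
      from set_lebesgue_integral_eq_integral(2)[OF this] show ?thesis
        by (simp add: set_lebesgue_integral_def)
    qed
    finally show ?thesis .
  qed (simp add: P_def F1_def)
  have e2: "(\<integral>s. Q s r \<partial>lebesgue) = G1 r * integral {0..r} f" for r
  proof (cases "r \<in> {0..t}")
    case True
    have "(\<integral>s. Q s r \<partial>lebesgue) = (\<integral>s. G1 r * (indicator {0..<r} s *\<^sub>R f s) \<partial>lebesgue)"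
      unfolding Q_def using True
      by (intro Bochner_Integration.integral_cong) (auto simp: F1_def indicator_def)
    also have "\<dots> = G1 r * (\<integral>s. indicator {0..<r} s *\<^sub>R f s \<partial>lebesgue)"
      by (rule integral_mult_right_zero)
    also have "(\<integral>s. indicator {0..<r} s *\<^sub>R f s \<partial>lebesgue) = integral {0..<r} f"
    proof -
      have "set_integrable lebesgue {0..<r} f"
        using set_integrable_subset[of lebesgue "{0..t}" f "{0..<r}"] f True by (auto simp: subset_iff)
      from set_lebesgue_integral_eq_integral(2)[OF this] show ?thesis
        by (simp add: set_lebesgue_integral_def)
    qed
    also have "integral {0..<r} f = integral {0..r} f"
      by (rule integral_spike_set) (auto intro: negligible_subset[of "{r}"])
    finally show ?thesis .
  qed (simp add: Q_def G1_def)
  have i1: "integrable lebesgue (\<lambda>s. F1 s * integral {0..s} g)"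
    using P.integrable_fst[of P] iP e1 by simp
  have i2: "integrable lebesgue (\<lambda>r. G1 r * integral {0..r} f)"
    using P.integrable_snd[of Q] iQ e2 by simp
  have "integral\<^sup>L (lebesgue \<Otimes>\<^sub>M lebesgue) (\<lambda>(s,r). K s r)
      = integral\<^sup>L (lebesgue \<Otimes>\<^sub>M lebesgue) (\<lambda>(s,r). P s r) + integral\<^sup>L (lebesgue \<Otimes>\<^sub>M lebesgue) (\<lambda>(s,r). Q s r)"
    by (subst Bochner_Integration.integral_add[OF iP iQ, symmetric])
       (auto intro!: Bochner_Integration.integral_cong simp: K_def P_def Q_def)
  also have "integral\<^sup>L (lebesgue \<Otimes>\<^sub>M lebesgue) (\<lambda>(s,r). P s r) = (\<integral>s. F1 s * integral {0..s} g \<partial>lebesgue)"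
    using P.integral_fst[of P] iP e1 by simp
  also have "integral\<^sup>L (lebesgue \<Otimes>\<^sub>M lebesgue) (\<lambda>(s,r). Q s r) = (\<integral>r. G1 r * integral {0..r} f \<partial>lebesgue)"
    using P.integral_snd[of Q] iQ e2 by simp
  finally have eq: "integral\<^sup>L (lebesgue \<Otimes>\<^sub>M lebesgue) (\<lambda>(s,r). K s r) = 
     (\<integral>s. F1 s * integral {0..s} g \<partial>lebesgue) + (\<integral>r. G1 r * integral {0..r} f \<partial>lebesgue)" .
  have "integral\<^sup>L (lebesgue \<Otimes>\<^sub>M lebesgue) (\<lambda>(s,r). K s r) = (\<integral>s. F1 s \<partial>lebesgue) * (\<integral>r. G1 r \<partial>lebesgue)"
    using P.integral_fst[of K] iK by (simp add: K_def)
  also have "(\<integral>s. F1 s \<partial>lebesgue) = integral {0..t} f"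
    using set_lebesgue_integral_eq_integral(2)[of "{0..t}" f] f
    by (simp add: set_lebesgue_integral_def absolutely_integrable_on_def F1_def)
  also have "(\<integral>s. G1 s \<partial>lebesgue) = integral {0..t} g"
    using set_lebesgue_integral_eq_integral(2)[of "{0..t}" g] g
    by (simp add: set_lebesgue_integral_def absolutely_integrable_on_def G1_def)
  finally have eq2: "integral {0..t} f * integral {0..t} g = 
     (\<integral>s. F1 s * integral {0..s} g \<partial>lebesgue) + (\<integral>r. G1 r * integral {0..r} f \<partial>lebesgue)"
    using eq by simp
  have h1: "((\<lambda>s. f s * integral {0..s} g) has_integral (\<integral>s. F1 s * integral {0..s} g \<partial>lebesgue)) {0..t}"
  proof -
    have si: "set_integrable lebesgue {0..t} (\<lambda>s. f s * integral {0..s} g)"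
      using i1 by (simp add: set_integrable_def F1_def mult.assoc)
    show ?thesis using has_integral_set_lebesgue[OF si]
      by (simp add: set_lebesgue_integral_def F1_def mult.assoc)
  qed
  have h2: "((\<lambda>s. integral {0..s} f * g s) has_integral (\<integral>r. G1 r * integral {0..r} f \<partial>lebesgue)) {0..t}"
  proof -
    have si: "set_integrable lebesgue {0..t} (\<lambda>s. integral {0..s} f * g s)"
      using i2 by (simp add: set_integrable_def G1_def mult_ac)
    show ?thesis using has_integral_set_lebesgue[OF si]
      by (simp add: set_lebesgue_integral_def G1_def mult_ac)
  qed
  show ?thesis unfolding eq2 by (rule has_integral_add[OF h1 h2])
qed

definition ACi :: "(real \<Rightarrow> 'a::euclidean_space) \<Rightarrow> (real \<Rightarrow> 'a) \<Rightarrow> bool" where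
  "ACi f F \<longleftrightarrow> f absolutely_integrable_on {0..1} \<and> (\<forall>t\<in>{0..1}. (f has_integral (F t - F 0)) {0..t})"

lemma ACi_eq: "ACi f F \<Longrightarrow> t \<in> {0..1} \<Longrightarrow> F t = F 0 + integral {0..t} f"
  unfolding ACi_def by (metis add.commute diff_add_cancel integral_unique)

lemma ACi_int: "ACi f F \<Longrightarrow> f absolutely_integrable_on {0..1}"
  unfolding ACi_def by auto

lemma ACi_sub: "ACi f F \<Longrightarrow> t \<in> {0..1} \<Longrightarrow> f absolutely_integrable_on {0..t}"
  unfolding ACi_def by (auto intro: absolutely_integrable_on_subinterval)

lemma ACi_cont: assumes "ACi f F" shows "continuous_on {0..1} F"
proof -
  have "f integrable_on {0..1}" using assms unfolding ACi_def
    using set_lebesgue_integral_eq_integral(1) by blast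
  then have "continuous_on {0..1} (\<lambda>t. integral {0..t} f)"
    by (rule indefinite_integral_continuous_1)
  then have "continuous_on {0..1} (\<lambda>t. F 0 + integral {0..t} f)"
    by (rule continuous_on_add[OF continuous_on_const])
  then show ?thesis
    by (rule continuous_on_eq) (metis ACi_eq[OF assms])
qed

lemma ACi_I:
  assumes "f absolutely_integrable_on {0..1}"
  shows "ACi f (\<lambda>t. c + integral {0..t} f)"
  unfolding ACi_def
proof (intro conjI ballI assms)
  fix t :: real assume t: "t \<in> {0..1}"
  have "f absolutely_integrable_on {0..t}" using assms t by (auto intro: absolutely_integrable_on_subinterval)
  then have "f integrable_on {0..t}" using set_lebesgue_integral_eq_integral(1) by blast
  then show "(f has_integral (c + integral {0..t} f - (c + integral {0..0} f))) {0..t}"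
    by (simp add: integrable_integral)
qed

lemma ACi_cong:
  assumes "ACi f F" "\<And>s. s \<in> {0..1} \<Longrightarrow> f s = g s" "\<And>s. s \<in> {0..1} \<Longrightarrow> F s = G s"
  shows "ACi g G"
  unfolding ACi_def
proof (intro conjI ballI)
  show "g absolutely_integrable_on {0..1}"
    by (rule absolutely_integrable_spike[OF ACi_int[OF assms(1)], where S="{}"]) (use assms(2) in auto)
  fix t :: real assume t: "t \<in> {0..1}"
  have "(f has_integral (F t - F 0)) {0..t}" using assms(1) t unfolding ACi_def by auto
  then have "(g has_integral (F t - F 0)) {0..t}"
    by (rule has_integral_eq[rotated]) (use assms(2) t in auto)
  then show "(g has_integral (G t - G 0)) {0..t}" using assms(3) t by auto
qed

lemma ACi_add:
  assumes "ACi f F" "ACi g G"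
  shows "ACi (\<lambda>s. f s + g s) (\<lambda>s. F s + G s)"
  unfolding ACi_def
proof (intro conjI ballI)
  show "(\<lambda>s. f s + g s) absolutely_integrable_on {0..1}"
    by (rule set_integral_add(1)[OF ACi_int[OF assms(1)] ACi_int[OF assms(2)]])
  fix t :: real assume t: "t \<in> {0..1}"
  have hh: "(f has_integral (F t - F 0)) {0..t}" "(g has_integral (G t - G 0)) {0..t}"
    using assms t unfolding ACi_def by auto
  have e: "F t + G t - (F 0 + G 0) = (F t - F 0) + (G t - G 0)" by (simp add: algebra_simps)
  from has_integral_add[OF hh] show "((\<lambda>s. f s + g s) has_integral (F t + G t - (F 0 + G 0))) {0..t}"
    unfolding e .
qed

lemma ACi_const: "ACi (\<lambda>s. 0) (\<lambda>s. c)"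
  unfolding ACi_def by auto

lemma ACi_linear:
  assumes L: "bounded_linear L" and "ACi f F"
  shows "ACi (\<lambda>s. L (f s)) (\<lambda>s. L (F s))"
  unfolding ACi_def
proof (intro conjI ballI)
  show "(\<lambda>s. L (f s)) absolutely_integrable_on {0..1}"
    using absolutely_integrable_linear[OF ACi_int[OF assms(2)] L] by (simp add: o_def)
  fix t :: real assume t: "t \<in> {0..1}"
  have "(f has_integral (F t - F 0)) {0..t}" using assms(2) t unfolding ACi_def by auto
  from has_integral_linear[OF this L] show "((\<lambda>s. L (f s)) has_integral (L (F t) - L (F 0))) {0..t}"
    by (simp add: o_def linear_diff[OF bounded_linear.linear[OF L]])
qed

lemma bilinear_expand:
  fixes h :: "'a::euclidean_space \<Rightarrow> 'b::euclidean_space \<Rightarrow> 'c::real_vector"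
  assumes h: "bilinear h"
  shows "h x y = (\<Sum>i\<in>Basis. \<Sum>j\<in>Basis. ((x \<bullet> i) * (y \<bullet> j)) *\<^sub>R h i j)"
proof -
  have "h x y = h (\<Sum>i\<in>Basis. (x \<bullet> i) *\<^sub>R i) (\<Sum>j\<in>Basis. (y \<bullet> j) *\<^sub>R j)"
    by (simp add: euclidean_representation)
  also have "\<dots> = (\<Sum>(i,j)\<in>Basis \<times> Basis. h ((x \<bullet> i) *\<^sub>R i) ((y \<bullet> j) *\<^sub>R j))"
    by (rule bilinear_sum[OF h])
  also have "\<dots> = (\<Sum>(i,j)\<in>Basis \<times> Basis. ((x \<bullet> i) * (y \<bullet> j)) *\<^sub>R h i j)"
    by (simp add: bilinear_lmul[OF h] bilinear_rmul[OF h] mult.commute)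
  also have "\<dots> = (\<Sum>i\<in>Basis. \<Sum>j\<in>Basis. ((x \<bullet> i) * (y \<bullet> j)) *\<^sub>R h i j)"
    by (simp add: sum.cartesian_product)
  finally show ?thesis .
qed

lemma vec_core:
  fixes h :: "'a::euclidean_space \<Rightarrow> 'b::euclidean_space \<Rightarrow> 'c::euclidean_space"
    and f :: "real \<Rightarrow> 'a" and g :: "real \<Rightarrow> 'b" and t :: real
  assumes h: "bilinear h" and f: "f absolutely_integrable_on {0..t}" and g: "g absolutely_integrable_on {0..t}"
  shows "((\<lambda>s. h (f s) (integral {0..s} g) + h (integral {0..s} f) (g s)) has_integral
           h (integral {0..t} f) (integral {0..t} g)) {0..t}"
proof -
  have fs: "f integrable_on {0..s}" if "s \<in> {0..t}" for s
    using absolutely_integrable_on_subinterval[OF f, of 0 s] that set_lebesgue_integral_eq_integral(1) by auto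
  have gs: "g integrable_on {0..s}" if "s \<in> {0..t}" for s
    using absolutely_integrable_on_subinterval[OF g, of 0 s] that set_lebesgue_integral_eq_integral(1) by auto
  have core: "((\<lambda>s. ((f s \<bullet> i) * integral {0..s} (\<lambda>x. g x \<bullet> j) + integral {0..s} (\<lambda>x. f x \<bullet> i) * (g s \<bullet> j)) *\<^sub>R h i j)
     has_integral ((integral {0..t} (\<lambda>x. f x \<bullet> i) * integral {0..t} (\<lambda>x. g x \<bullet> j)) *\<^sub>R h i j)) {0..t}" for i j
    by (rule has_integral_scaleR_left[OF prod_core[OF absolutely_integrable_component[OF f] absolutely_integrable_component[OF g]]])
  have S: "((\<lambda>s. \<Sum>i\<in>Basis. \<Sum>j\<in>Basis. ((f s \<bullet> i) * integral {0..s} (\<lambda>x. g x \<bullet> j) + integral {0..s} (\<lambda>x. f x \<bullet> i) * (g s \<bullet> j)) *\<^sub>R h i j)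
     has_integral (\<Sum>i\<in>Basis. \<Sum>j\<in>Basis. (integral {0..t} (\<lambda>x. f x \<bullet> i) * integral {0..t} (\<lambda>x. g x \<bullet> j)) *\<^sub>R h i j)) {0..t}"
    by (intro has_integral_sum finite_Basis core)
  have t: "t \<in> {0..t}" if "0 \<le> t" using that by auto
  show ?thesis
  proof (cases "0 \<le> t")
    case False
    then have "{0..t} = {}" by auto
    then show ?thesis by (simp add: bilinear_lzero[OF h])
  next
    case True
    have val: "h (integral {0..t} f) (integral {0..t} g) = 
      (\<Sum>i\<in>Basis. \<Sum>j\<in>Basis. (integral {0..t} (\<lambda>x. f x \<bullet> i) * integral {0..t} (\<lambda>x. g x \<bullet> j)) *\<^sub>R h i j)"
      using fs[OF t[OF True]] gs[OF t[OF True]] by (simp add: bilinear_expand[OF h, of "integral {0..t} f"])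
    show ?thesis unfolding val
    proof (rule has_integral_eq[rotated, OF S])
      fix s assume s: "s \<in> {0..t}"
      show "(\<Sum>i\<in>Basis. \<Sum>j\<in>Basis. ((f s \<bullet> i) * integral {0..s} (\<lambda>x. g x \<bullet> j) + integral {0..s} (\<lambda>x. f x \<bullet> i) * (g s \<bullet> j)) *\<^sub>R h i j)
         = h (f s) (integral {0..s} g) + h (integral {0..s} f) (g s)"
        using fs[OF s] gs[OF s]
        by (simp add: bilinear_expand[OF h, of "f s"] bilinear_expand[OF h, of "integral {0..s} f"]
              sum.distrib[symmetric] scaleR_add_left)
    qed
  qed
qed

lemma ACi_bounded_measurable:
  assumes "ACi f F"
  shows "F \<in> borel_measurable (lebesgue_on {0..1})" "bounded (F ` {0..1})"
proof -
  have c: "continuous_on {0..1} F" by (rule ACi_cont[OF assms])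
  show "F \<in> borel_measurable (lebesgue_on {0..1})"
    by (rule continuous_imp_measurable_on_sets_lebesgue[OF c]) auto
  show "bounded (F ` {0..1})"
    by (rule compact_imp_bounded[OF compact_continuous_image[OF c]]) auto
qed

lemma bilinear_swap': "bilinear h \<Longrightarrow> bilinear (\<lambda>x y. h y x)"
  by (simp add: bilinear_def)

lemma ACi_prod:
  fixes h :: "'a::euclidean_space \<Rightarrow> 'b::euclidean_space \<Rightarrow> 'c::euclidean_space"
  assumes h: "bilinear h" and f: "ACi f F" and g: "ACi g G"
  shows "ACi (\<lambda>s. h (f s) (G s) + h (F s) (g s)) (\<lambda>s. h (F s) (G s))"
  unfolding ACi_def
proof (intro conjI ballI)
  have a1: "(\<lambda>s. h (f s) (G s)) absolutely_integrable_on {0..1}"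
    using absolutely_integrable_bounded_measurable_product[OF bilinear_swap'[OF h]
       ACi_bounded_measurable(1)[OF g] _ ACi_bounded_measurable(2)[OF g] ACi_int[OF f]] by simp
  have a2: "(\<lambda>s. h (F s) (g s)) absolutely_integrable_on {0..1}"
    using absolutely_integrable_bounded_measurable_product[OF h
       ACi_bounded_measurable(1)[OF f] _ ACi_bounded_measurable(2)[OF f] ACi_int[OF g]] by simp
  show "(\<lambda>s. h (f s) (G s) + h (F s) (g s)) absolutely_integrable_on {0..1}"
    by (rule set_integral_add(1)[OF a1 a2])
  fix t :: real assume t: "t \<in> {0..1}"
  have bb: "bounded_bilinear h" using h bilinear_conv_bounded_bilinear by blast
  have hf: "(f has_integral (F t - F 0)) {0..t}" using f t unfolding ACi_def by auto
  have hg: "(g has_integral (G t - G 0)) {0..t}" using g t unfolding ACi_def by auto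
  have i1: "((\<lambda>s. h (f s) (G 0)) has_integral h (F t - F 0) (G 0)) {0..t}"
    using has_integral_linear[OF hf bounded_bilinear.bounded_linear_left[OF bb, of "G 0"]] by (simp add: o_def)
  have i2: "((\<lambda>s. h (F 0) (g s)) has_integral h (F 0) (G t - G 0)) {0..t}"
    using has_integral_linear[OF hg bounded_bilinear.bounded_linear_right[OF bb, of "F 0"]] by (simp add: o_def)
  have i3: "((\<lambda>s. h (f s) (integral {0..s} g) + h (integral {0..s} f) (g s)) has_integral
           h (integral {0..t} f) (integral {0..t} g)) {0..t}"
    by (rule vec_core[OF h ACi_sub[OF f t] ACi_sub[OF g t]])
  have It: "integral {0..t} f = F t - F 0" "integral {0..t} g = G t - G 0"
    using hf hg by (auto dest: integral_unique)
  have all: "((\<lambda>s. h (f s) (G 0) + h (F 0) (g s) + (h (f s) (integral {0..s} g) + h (integral {0..s} f) (g s)))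
     has_integral (h (F t - F 0) (G 0) + h (F 0) (G t - G 0) + h (F t - F 0) (G t - G 0))) {0..t}"
    using has_integral_add[OF has_integral_add[OF i1 i2] i3] unfolding It .
  have val: "h (F t - F 0) (G 0) + h (F 0) (G t - G 0) + h (F t - F 0) (G t - G 0) = h (F t) (G t) - h (F 0) (G 0)"
    by (simp add: bilinear_lsub[OF h] bilinear_rsub[OF h] algebra_simps)
  show "((\<lambda>s. h (f s) (G s) + h (F s) (g s)) has_integral (h (F t) (G t) - h (F 0) (G 0))) {0..t}"
    unfolding val[symmetric]
  proof (rule has_integral_eq[rotated, OF all])
    fix s assume s: "s \<in> {0..t}"
    then have s1: "s \<in> {0..1}" using t by auto
    have "F s = F 0 + integral {0..s} f" "G s = G 0 + integral {0..s} g"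
      using ACi_eq[OF f s1] ACi_eq[OF g s1] by auto
    then show "h (f s) (G 0) + h (F 0) (g s) + (h (f s) (integral {0..s} g) + h (integral {0..s} f) (g s)) =
          h (f s) (G s) + h (F s) (g s)"
      by (simp add: bilinear_ladd[OF h] bilinear_radd[OF h] algebra_simps)
  qed
qed

lemma ACi_pow:
  fixes a V :: "real \<Rightarrow> complex"
  assumes "ACi a V"
  shows "ACi (\<lambda>s. of_nat (Suc n) * V s ^ n * a s) (\<lambda>s. V s ^ Suc n)"
proof (induction n)
  case 0
  show ?case by (rule ACi_cong[OF assms]) auto
next
  case (Suc n)
  have "ACi (\<lambda>s. (of_nat (Suc n) * V s ^ n * a s) * V s + V s ^ Suc n * a s) (\<lambda>s. V s ^ Suc n * V s)"
    by (rule ACi_prod[OF bilinear_times Suc assms])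
  then show ?case
    by (rule ACi_cong) (auto simp: algebra_simps)
qed

lemma sum_exp_le: "0 \<le> x \<Longrightarrow> (\<Sum>n<k. x^n /\<^sub>R fact n) \<le> exp (x::real)"
  using sum_le_suminf[OF sums_summable[OF exp_converges[of x]], of "{..<k}"] sums_unique[OF exp_converges[of x]]
  by auto

lemma ACi_exp0:
  fixes a V :: "real \<Rightarrow> complex"
  assumes aV: "ACi a V" and V0: "V 0 = 0"
  shows "ACi (\<lambda>s. exp (V s) * a s) (\<lambda>s. exp (V s))"
  unfolding ACi_def
proof (intro conjI ballI)
  have cV: "continuous_on {0..1} V" by (rule ACi_cont[OF aV])
  have cE: "continuous_on {0..1} (\<lambda>s. exp (V s))"
    by (intro continuous_intros cV)
  show "(\<lambda>s. exp (V s) * a s) absolutely_integrable_on {0..1}"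
    using absolutely_integrable_bounded_measurable_product[OF bilinear_times
       continuous_imp_measurable_on_sets_lebesgue[OF cE] _ 
       compact_imp_bounded[OF compact_continuous_image[OF cE]] ACi_int[OF aV]] by simp
  obtain B where B: "\<And>s. s \<in> {0..1} \<Longrightarrow> norm (V s) \<le> B"
    using compact_imp_bounded[OF compact_continuous_image[OF cV]] unfolding bounded_iff by fastforce
  fix t :: real assume t: "t \<in> {0..1}"
  have pw: "((\<lambda>s. (V s ^ n /\<^sub>R fact n) * a s) has_integral (V t ^ Suc n /\<^sub>R fact (Suc n))) {0..t}" for n
  proof -
    have "ACi (\<lambda>s. inverse (fact (Suc n)) *\<^sub>R (of_nat (Suc n) * V s ^ n * a s)) (\<lambda>s. inverse (fact (Suc n)) *\<^sub>R V s ^ Suc n)"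
      by (rule ACi_linear[OF bounded_linear_scaleR_right ACi_pow[OF aV]])
    then have "ACi (\<lambda>s. (V s ^ n /\<^sub>R fact n) * a s) (\<lambda>s. V s ^ Suc n /\<^sub>R fact (Suc n))"
    proof (rule ACi_cong)
      fix s :: real
      show "inverse (fact (Suc n)) *\<^sub>R (of_nat (Suc n) * V s ^ n * a s) = (V s ^ n /\<^sub>R fact n) * a s"
      proof -
        have e: "inverse (fact (Suc n)) * real (Suc n) = inverse (fact n :: real)"
          by (simp add: fact_Suc del: of_nat_Suc)
        have "of_nat (Suc n) * V s ^ n * a s = real (Suc n) *\<^sub>R (V s ^ n * a s)"
          by (simp add: scaleR_conv_of_real)
        then have "inverse (fact (Suc n)) *\<^sub>R (of_nat (Suc n) * V s ^ n * a s) = inverse (fact n) *\<^sub>R (V s ^ n * a s)"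
          using e by simp
        then show ?thesis by simp
      qed
    qed (simp add: field_simps)
    then show ?thesis using t V0 unfolding ACi_def by auto
  qed
  define fk where "fk k s = (\<Sum>n<k. (V s ^ n /\<^sub>R fact n) * a s)" for k s
  have ik: "(fk k has_integral (\<Sum>n<k. V t ^ Suc n /\<^sub>R fact (Suc n))) {0..t}" for k
    unfolding fk_def by (intro has_integral_sum pw) auto
  have ha: "(\<lambda>s. exp B * norm (a s)) integrable_on {0..t}"
  proof -
    have "a absolutely_integrable_on {0..t}" by (rule ACi_sub[OF aV t])
    then have "(\<lambda>s. norm (a s)) integrable_on {0..t}" by (simp add: absolutely_integrable_on_def)
    then show ?thesis using integrable_cmul[of "\<lambda>s. norm (a s)" "{0..t}" "exp B"] by simp
  qed
  have le: "norm (fk k s) \<le> exp B * norm (a s)" if s: "s \<in> {0..t}" for k s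
  proof -
    have s1: "s \<in> {0..1}" using s t by auto
    have "norm (fk k s) = norm (\<Sum>n<k. V s ^ n /\<^sub>R fact n) * norm (a s)"
      unfolding fk_def sum_distrib_right[symmetric] by (rule norm_mult)
    also have "norm (\<Sum>n<k. V s ^ n /\<^sub>R fact n) \<le> (\<Sum>n<k. norm (V s) ^ n /\<^sub>R fact n)"
      by (rule order_trans[OF norm_sum]) (simp add: norm_power)
    also have "\<dots> \<le> exp (norm (V s))" by (rule sum_exp_le) simp
    also have "\<dots> \<le> exp B" using B[OF s1] by simp
    finally show ?thesis by (simp add: mult_right_mono)
  qed
  have conv: "(\<lambda>k. fk k s) \<longlonglongrightarrow> exp (V s) * a s" for s
    unfolding fk_def sum_distrib_right[symmetric]
    by (intro tendsto_mult_right) (use exp_converges[of "V s"] in \<open>simp add: sums_def\<close>)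
  have ii: "(\<lambda>s. exp (V s) * a s) integrable_on {0..t}"
    and lim: "(\<lambda>k. integral {0..t} (fk k)) \<longlonglongrightarrow> integral {0..t} (\<lambda>s. exp (V s) * a s)"
    using dominated_convergence[of fk "{0..t}" "\<lambda>s. exp B * norm (a s)" "\<lambda>s. exp (V s) * a s"]
      ik ha le conv by (auto simp: integrable_on_def)
  have lim2: "(\<lambda>k. integral {0..t} (fk k)) \<longlonglongrightarrow> exp (V t) - 1"
  proof -
    have "(\<lambda>n. V t ^ Suc n /\<^sub>R fact (Suc n)) sums (exp (V t) - 1)"
      using sums_Suc_iff[where f="\<lambda>n. V t ^ n /\<^sub>R fact n" and s="exp (V t) - 1"] exp_converges[of "V t"] by simp
    then show ?thesis unfolding sums_def integral_unique[OF ik] .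
  qed
  have "integral {0..t} (\<lambda>s. exp (V s) * a s) = exp (V t) - exp (V 0)"
    using LIMSEQ_unique[OF lim lim2] V0 by simp
  then show "((\<lambda>s. exp (V s) * a s) has_integral (exp (V t) - exp (V 0))) {0..t}"
    using integrable_integral[OF ii] by simp
qed


definition blk :: "complex \<Rightarrow> complex \<Rightarrow> complex \<Rightarrow> complex \<Rightarrow> complex \<Rightarrow> cmat3" where
  "blk p q r s z = (\<chi> a b. if a = 1 \<and> b = 1 then p else if a = 1 \<and> b = 2 then q else
     if a = 2 \<and> b = 1 then r else if a = 2 \<and> b = 2 then s else if a = 3 \<and> b = 3 then z else 0)"

lemma three_neq[simp]: "(1::3) \<noteq> 2" "(1::3) \<noteq> 3" "(2::3) \<noteq> 3" "(2::3) \<noteq> 1" "(3::3) \<noteq> 1" "(3::3) \<noteq> 2"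
  by simp_all

lemma blk_nth[simp]:
  "blk p q r s z $ 1 $ 1 = p" "blk p q r s z $ 1 $ 2 = q" "blk p q r s z $ 1 $ 3 = 0"
  "blk p q r s z $ 2 $ 1 = r" "blk p q r s z $ 2 $ 2 = s" "blk p q r s z $ 2 $ 3 = 0"
  "blk p q r s z $ 3 $ 1 = 0" "blk p q r s z $ 3 $ 2 = 0" "blk p q r s z $ 3 $ 3 = z"
  by (simp_all add: blk_def)

lemma mat_eq3: "(M::cmat3) = N \<longleftrightarrow> (\<forall>i j. M $ i $ j = N $ i $ j)"
  by (simp add: vec_eq_iff)

lemma blk_eq_iff: "blk p q r s z = blk p' q' r' s' z' \<longleftrightarrow> p = p' \<and> q = q' \<and> r = r' \<and> s = s' \<and> z = z'"
  by (auto simp: mat_eq3 forall_3)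

lemma munit_blk:
  "munit 1 1 = blk 1 0 0 0 0" "munit 1 2 = blk 0 1 0 0 0" "munit 2 1 = blk 0 0 1 0 0"
  "munit 2 2 = blk 0 0 0 1 0" "munit 3 3 = blk 0 0 0 0 1"
  by (auto simp: mat_eq3 forall_3 munit_def)

lemma csmult_blk: "csmult c (blk p q r s z) = blk (c * p) (c * q) (c * r) (c * s) (c * z)"
  by (auto simp: mat_eq3 forall_3 csmult_def)

lemma blk_add: "blk p q r s z + blk p' q' r' s' z' = blk (p+p') (q+q') (r+r') (s+s') (z+z')"
  by (auto simp: mat_eq3 forall_3)

lemma blk_diff: "blk p q r s z - blk p' q' r' s' z' = blk (p-p') (q-q') (r-r') (s-s') (z-z')"
  by (auto simp: mat_eq3 forall_3)

lemma blk_mult: "blk p1 q1 r1 s1 z1 ** blk p2 q2 r2 s2 z2 =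
   blk (p1 * p2 + q1 * r2) (p1 * q2 + q1 * s2) (r1 * p2 + s1 * r2) (r1 * q2 + s1 * s2) (z1 * z2)"
  by (auto simp: mat_eq3 forall_3 matrix_matrix_mult_def sum_3)

lemma mult_blk_3: "(M ** blk p q r s z) $ i $ 3 = M $ i $ 3 * z"
  by (simp add: matrix_matrix_mult_def sum_3)

lemma Idm_blk: "Idm = blk 1 0 0 1 1"
  by (auto simp: mat_eq3 forall_3 Idm_def mat_def)

lemma E_blk:
  "E1 = blk 0 (1/2) (-1/2) 0 0" "E2 = blk 0 (\<i>/2) (\<i>/2) 0 0"
  "E3 = blk (\<i>/2) 0 0 (-\<i>/2) 0" "E4 = blk 0 0 0 0 1"
  by (simp_all add: E1_def E2_def E3_def E4_def munit_blk csmult_blk blk_add blk_diff)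

lemma grp_blk: "grp A B v = blk A B (- cnj B) (cnj A) (of_real (exp v))"
  by (simp add: grp_def munit_blk csmult_blk blk_add blk_diff)

lemma cscale: "of_real r * (z::complex) = r *\<^sub>R z"
  by (simp add: scaleR_conv_of_real)

lemma csmult_of_real: "csmult (of_real r) M = r *\<^sub>R M"
  by (simp add: mat_eq3 csmult_def cscale)

lemma matrix_add_rdistrib3: "((B + C) ** A) = (B ** A) + (C ** (A::cmat3))"
  by (simp add: vec_eq_iff matrix_matrix_mult_def sum.distrib distrib_right)

lemma mm_scaleR_right: "(M::cmat3) ** (r *\<^sub>R N) = r *\<^sub>R (M ** N)"
  by (simp add: vec_eq_iff matrix_matrix_mult_def scaleR_sum_right)

lemma mm_scaleR_left: "(r *\<^sub>R M) ** (N::cmat3) = r *\<^sub>R (M ** N)"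
  by (simp add: vec_eq_iff matrix_matrix_mult_def scaleR_sum_right)

lemma bilinear_mm: "bilinear (\<lambda>(M::cmat3) (N::cmat3). M ** N)"
  unfolding bilinear_def
  by (auto intro!: linearI simp: matrix_add_ldistrib matrix_add_rdistrib3 mm_scaleR_right mm_scaleR_left)

lemma bounded_linear_csmult: "bounded_linear (\<lambda>z. csmult z M)"
proof -
  have "linear (\<lambda>z. csmult z M)"
    by (auto intro!: linearI simp: vec_eq_iff csmult_def cscale[symmetric] algebra_simps)
  then show ?thesis by (simp add: linear_conv_bounded_linear)
qed


definition X2a :: "real \<Rightarrow> cmat3" where
  "X2a a = blk (- (\<i> * of_real a) / 2) 0 0 (\<i> * of_real a / 2) 1"

definition Rot :: "real \<Rightarrow> cmat3" where
  "Rot th = blk (exp (\<i> * of_real (th/2))) 0 0 (exp (- \<i> * of_real (th/2))) 1"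

lemma X2a_E: "E4 - E3 = X2a 1" "E4 = X2a 0"
  by (simp_all add: X2a_def E_blk blk_diff)

lemma exp_half1: "exp (- \<i> * of_real (th/2)) = exp (\<i> * of_real (th/2)) * (of_real (cos th) - \<i> * of_real (sin th))"
proof -
  have "of_real (cos th) - \<i> * of_real (sin th) = exp (\<i> * of_real (- th))"
    by (simp add: complex_eq_iff Re_exp Im_exp)
  moreover have "exp (\<i> * of_real (th/2)) * exp (\<i> * of_real (- th)) = exp (- \<i> * of_real (th/2))"
    by (simp add: exp_add[symmetric] algebra_simps)
  ultimately show ?thesis by simp
qed

lemma exp_half2: "exp (\<i> * of_real (th/2)) = exp (- \<i> * of_real (th/2)) * (of_real (cos th) + \<i> * of_real (sin th))"
proof -
  have "of_real (cos th) + \<i> * of_real (sin th) = exp (\<i> * of_real th)"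
    by (simp add: complex_eq_iff Re_exp Im_exp)
  moreover have "exp (- \<i> * of_real (th/2)) * exp (\<i> * of_real th) = exp (\<i> * of_real (th/2))"
    by (simp add: exp_add[symmetric] algebra_simps)
  ultimately show ?thesis by simp
qed

lemma key_identity:
  fixes x1 x2 x3 a sg th :: real
  shows "(csmult (of_real x1) E1 + csmult (of_real x2) (X2a a) + csmult (of_real x3) E2) ** Rot th
       + Rot th ** csmult (of_real (sg * x2)) E3
     = Rot th ** (csmult (of_real (x1 * cos th + x3 * sin th)) E1 + csmult (of_real x2) (X2a (a - sg))
         + csmult (of_real (x3 * cos th - x1 * sin th)) E2)"
proof -
  define c where "c = exp (\<i> * of_real (th/2))"
  define d where "d = exp (- \<i> * of_real (th/2))"
  have h1: "d = c * (of_real (cos th) - \<i> * of_real (sin th))" unfolding c_def d_def by (rule exp_half1)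
  have h2: "c = d * (of_real (cos th) + \<i> * of_real (sin th))" unfolding c_def d_def by (rule exp_half2)
  have R: "Rot th = blk c 0 0 d 1" by (simp add: Rot_def c_def d_def)
  have ii: "\<i> * \<i> = (-1::complex)" by simp
  show ?thesis
    unfolding R E_blk X2a_def csmult_blk blk_add blk_mult blk_eq_iff
    apply (intro conjI)
    apply (simp_all add: algebra_simps)
    using h1 ii apply algebra
    using h2 ii apply algebra
    done
qed

definition Mf :: "cmat3 \<Rightarrow> cmat3 \<Rightarrow> cmat3 \<Rightarrow> (real \<Rightarrow> real) \<Rightarrow> (real \<Rightarrow> real) \<Rightarrow> (real \<Rightarrow> real) \<Rightarrow> real \<Rightarrow> cmat3" where
  "Mf X1 X2 X3 u1 u2 u3 s = csmult (of_real (u1 s)) X1 + csmult (of_real (u2 s)) X2 + csmult (of_real (u3 s)) X3"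

lemma absint_scale_const:
  assumes "(u::real\<Rightarrow>real) absolutely_integrable_on {0..1}"
  shows "(\<lambda>s. csmult (of_real (u s)) X) absolutely_integrable_on {0..1}"
  using absolutely_integrable_linear[OF assms bounded_linear_scaleR_left[of X]]
  by (simp add: o_def csmult_of_real)

lemma Mf_absint:
  assumes "u1 absolutely_integrable_on {0..1}" "u2 absolutely_integrable_on {0..1}" "u3 absolutely_integrable_on {0..1}"
  shows "Mf X1 X2 X3 u1 u2 u3 absolutely_integrable_on {0..1}"
proof -
  have "(\<lambda>s. csmult (of_real (u1 s)) X1 + csmult (of_real (u2 s)) X2) absolutely_integrable_on {0..1}"
    by (rule set_integral_add(1)[OF absint_scale_const[OF assms(1)] absint_scale_const[OF assms(2)]])
  from set_integral_add(1)[OF this absint_scale_const[OF assms(3)]] show ?thesis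
    unfolding Mf_def[abs_def] by simp
qed

lemma horizontal_ACi:
  "horizontal X1 X2 X3 \<gamma> u1 u2 u3 \<longleftrightarrow>
     u1 absolutely_integrable_on {0..1} \<and> u2 absolutely_integrable_on {0..1} \<and> u3 absolutely_integrable_on {0..1}
     \<and> ACi (\<lambda>s. \<gamma> s ** Mf X1 X2 X3 u1 u2 u3 s) \<gamma>"
proof
  assume H: "horizontal X1 X2 X3 \<gamma> u1 u2 u3"
  then have u: "u1 absolutely_integrable_on {0..1}" "u2 absolutely_integrable_on {0..1}" "u3 absolutely_integrable_on {0..1}"
    and hi: "\<forall>t\<in>{0..1}. ((\<lambda>s. \<gamma> s ** Mf X1 X2 X3 u1 u2 u3 s) has_integral (\<gamma> t - \<gamma> 0)) {0..t}"
    unfolding horizontal_def Mf_def by blast+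
  have int1: "(\<lambda>s. \<gamma> s ** Mf X1 X2 X3 u1 u2 u3 s) integrable_on {0..1}" using hi by auto
  have geq: "\<gamma> t = \<gamma> 0 + integral {0..t} (\<lambda>s. \<gamma> s ** Mf X1 X2 X3 u1 u2 u3 s)" if "t \<in> {0..1}" for t
  proof -
    have "integral {0..t} (\<lambda>s. \<gamma> s ** Mf X1 X2 X3 u1 u2 u3 s) = \<gamma> t - \<gamma> 0"
      using hi that integral_unique by blast
    then show ?thesis by simp
  qed
  have "continuous_on {0..1} (\<lambda>t. integral {0..t} (\<lambda>s. \<gamma> s ** Mf X1 X2 X3 u1 u2 u3 s))"
    by (rule indefinite_integral_continuous_1[OF int1])
  then have "continuous_on {0..1} (\<lambda>t. \<gamma> 0 + integral {0..t} (\<lambda>s. \<gamma> s ** Mf X1 X2 X3 u1 u2 u3 s))"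
    by (rule continuous_on_add[OF continuous_on_const])
  then have c: "continuous_on {0..1} \<gamma>"
    by (rule continuous_on_eq) (erule geq[symmetric])
  have ai: "(\<lambda>s. \<gamma> s ** Mf X1 X2 X3 u1 u2 u3 s) absolutely_integrable_on {0..1}"
    using absolutely_integrable_bounded_measurable_product[OF bilinear_mm
       continuous_imp_measurable_on_sets_lebesgue[OF c] _
       compact_imp_bounded[OF compact_continuous_image[OF c]] Mf_absint[OF u]] by simp
  show "u1 absolutely_integrable_on {0..1} \<and> u2 absolutely_integrable_on {0..1} \<and> u3 absolutely_integrable_on {0..1}
     \<and> ACi (\<lambda>s. \<gamma> s ** Mf X1 X2 X3 u1 u2 u3 s) \<gamma>"
    using u ai hi unfolding ACi_def by blast
next
  assume "u1 absolutely_integrable_on {0..1} \<and> u2 absolutely_integrable_on {0..1} \<and> u3 absolutely_integrable_on {0..1}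
     \<and> ACi (\<lambda>s. \<gamma> s ** Mf X1 X2 X3 u1 u2 u3 s) \<gamma>"
  then show "horizontal X1 X2 X3 \<gamma> u1 u2 u3"
    unfolding horizontal_def ACi_def Mf_def by blast
qed

lemma Mf_blk: "Mf E1 (X2a a) E2 u1 u2 u3 s =
   blk (of_real (u2 s) * (- (\<i> * of_real a) / 2)) (of_real (u1 s) / 2 + of_real (u3 s) * \<i> / 2)
       (- of_real (u1 s) / 2 + of_real (u3 s) * \<i> / 2) (of_real (u2 s) * (\<i> * of_real a / 2)) (of_real (u2 s))"
  by (simp add: Mf_def E_blk X2a_def csmult_blk blk_add)

lemma ACi_w:
  assumes "u absolutely_integrable_on {0..1}"
  shows "ACi u (\<lambda>t. integral {0..t} u)"
  using ACi_I[OF assms, of 0] by simp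

lemma gamma33:
  assumes H: "horizontal E1 (X2a a) E2 \<gamma> u1 u2 u3" and g0: "\<gamma> 0 = Idm" and t: "t \<in> {0..1}"
  shows "\<gamma> t $ 3 $ 3 = of_real (exp (integral {0..t} u2))"
proof -
  have u2: "u2 absolutely_integrable_on {0..1}" and A: "ACi (\<lambda>s. \<gamma> s ** Mf E1 (X2a a) E2 u1 u2 u3 s) \<gamma>"
    using H unfolding horizontal_ACi by auto
  have bl: "bounded_linear (\<lambda>M::cmat3. M $ 3 $ 3)"
  proof -
    have "linear (\<lambda>M::cmat3. M $ 3 $ 3)" by (rule linearI) simp_all
    then show ?thesis by (simp add: linear_conv_bounded_linear)
  qed
  have Y: "ACi (\<lambda>s. \<gamma> s $ 3 $ 3 * of_real (u2 s)) (\<lambda>s. \<gamma> s $ 3 $ 3)"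
    using ACi_linear[OF bl A] by (simp add: Mf_blk mult_blk_3)
  define w where "w t = integral {0..t} u2" for t
  have Aw: "ACi u2 w" unfolding w_def by (rule ACi_w[OF u2])
  have AW: "ACi (\<lambda>s. - of_real (u2 s)) (\<lambda>s. - of_real (w s) :: complex)"
    using ACi_linear[OF bounded_linear_minus[OF bounded_linear_of_real] Aw] by simp
  have E: "ACi (\<lambda>s. exp (- of_real (w s)) * - of_real (u2 s)) (\<lambda>s. exp (- of_real (w s) :: complex))"
    by (rule ACi_exp0[OF AW]) (simp add: w_def)
  have P: "ACi (\<lambda>s. \<gamma> s $ 3 $ 3 * of_real (u2 s) * exp (- of_real (w s)) + \<gamma> s $ 3 $ 3 * (exp (- of_real (w s)) * - of_real (u2 s)))
     (\<lambda>s. \<gamma> s $ 3 $ 3 * exp (- of_real (w s)))"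
    by (rule ACi_prod[OF bilinear_times Y E])
  have "\<gamma> t $ 3 $ 3 * exp (- of_real (w t)) = \<gamma> 0 $ 3 $ 3 * exp (- of_real (w 0)) + integral {0..t} (\<lambda>s. 0::complex)"
  proof -
    have P0: "ACi (\<lambda>s. 0) (\<lambda>s. \<gamma> s $ 3 $ 3 * exp (- of_real (w s)))"
      by (rule ACi_cong[OF P]) (simp_all add: algebra_simps)
    show ?thesis by (rule ACi_eq[OF P0 t])
  qed
  also have "\<dots> = 1" using g0 by (simp add: w_def Idm_blk)
  finally have "\<gamma> t $ 3 $ 3 = exp (of_real (w t))"
    by (simp add: exp_minus field_simps)
  then show ?thesis by (simp add: w_def exp_of_real)
qed

lemma Rot_ACi:
  assumes Aw: "ACi u w" and w0: "w 0 = 0"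
  shows "ACi (\<lambda>s. Rot (sg * w s) ** csmult (of_real (sg * u s)) E3) (\<lambda>s. Rot (sg * w s))"
proof -
  have A0: "ACi (\<lambda>s. (sg / 2 * u s) *\<^sub>R \<i>) (\<lambda>s. (sg / 2 * w s) *\<^sub>R \<i>)"
    by (rule ACi_linear[OF bounded_linear_scaleR_left ACi_linear[OF bounded_linear_mult_right Aw]])
  define V where "V s = \<i> * complex_of_real (sg * w s / 2)" for s
  define a1 where "a1 s = \<i> * complex_of_real (sg * u s / 2)" for s
  have A1: "ACi a1 V"
    by (rule ACi_cong[OF A0]) (simp_all add: V_def a1_def scaleR_conv_of_real field_simps)
  have V0: "V 0 = 0" by (simp add: V_def w0)
  have E1: "ACi (\<lambda>s. exp (V s) * a1 s) (\<lambda>s. exp (V s))" by (rule ACi_exp0[OF A1 V0])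
  have bm: "bounded_linear (\<lambda>x::complex. - x)" by (rule bounded_linear_minus[OF bounded_linear_ident])
  have A2: "ACi (\<lambda>s. - a1 s) (\<lambda>s. - V s)" using ACi_linear[OF bm A1] by simp
  have E2: "ACi (\<lambda>s. exp (- V s) * - a1 s) (\<lambda>s. exp (- V s))" by (rule ACi_exp0[OF A2]) (simp add: V0)
  have S: "ACi (\<lambda>s. csmult (exp (V s) * a1 s) (blk 1 0 0 0 0) + csmult (exp (- V s) * - a1 s) (blk 0 0 0 1 0) + 0)
     (\<lambda>s. csmult (exp (V s)) (blk 1 0 0 0 0) + csmult (exp (- V s)) (blk 0 0 0 1 0) + blk 0 0 0 0 1)"
    by (intro ACi_add ACi_linear[OF bounded_linear_csmult] E1 E2 ACi_const)
  show ?thesis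
  proof (rule ACi_cong[OF S])
    fix s :: real
    show "csmult (exp (V s) * a1 s) (blk 1 0 0 0 0) + csmult (exp (- V s) * - a1 s) (blk 0 0 0 1 0) + 0 =
       Rot (sg * w s) ** csmult (complex_of_real (sg * u s)) E3"
      by (simp add: Rot_def V_def a1_def E_blk csmult_blk blk_add blk_mult algebra_simps)
    show "csmult (exp (V s)) (blk 1 0 0 0 0) + csmult (exp (- V s)) (blk 0 0 0 1 0) + blk 0 0 0 0 1 = Rot (sg * w s)"
      by (simp add: Rot_def V_def csmult_blk blk_add)
  qed
qed

lemma rot_len:
  fixes x y z c s :: real
  assumes "s\<^sup>2 + c\<^sup>2 = 1"
  shows "(x * c + z * s)\<^sup>2 + y\<^sup>2 + (z * c - x * s)\<^sup>2 = x\<^sup>2 + y\<^sup>2 + z\<^sup>2"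
proof -
  have "(x * c + z * s)\<^sup>2 + (z * c - x * s)\<^sup>2 = (x\<^sup>2 + z\<^sup>2) * (s\<^sup>2 + c\<^sup>2)"
    by (simp add: power2_eq_square algebra_simps)
  then show ?thesis using assms by simp
qed

lemma sr_length_rot:
  "sr_length (\<lambda>s. u1 s * cos (th s) + u3 s * sin (th s)) u2 (\<lambda>s. u3 s * cos (th s) - u1 s * sin (th s))
   = sr_length u1 u2 u3"
  unfolding sr_length_def by (simp add: rot_len)

lemma transform:
  assumes H: "horizontal E1 (X2a a) E2 \<gamma> u1 u2 u3" and g0: "\<gamma> 0 = Idm"
  defines "w \<equiv> \<lambda>s. integral {0..s} u2"
  shows "horizontal E1 (X2a (a - sg)) E2 (\<lambda>s. \<gamma> s ** Rot (sg * w s))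
           (\<lambda>s. u1 s * cos (sg * w s) + u3 s * sin (sg * w s)) u2
           (\<lambda>s. u3 s * cos (sg * w s) - u1 s * sin (sg * w s))"
proof -
  have u1: "u1 absolutely_integrable_on {0..1}" and u2: "u2 absolutely_integrable_on {0..1}"
    and u3: "u3 absolutely_integrable_on {0..1}"
    and A: "ACi (\<lambda>s. \<gamma> s ** Mf E1 (X2a a) E2 u1 u2 u3 s) \<gamma>"
    using H unfolding horizontal_ACi by auto
  have Aw: "ACi u2 w" unfolding w_def by (rule ACi_w[OF u2])
  have w0: "w 0 = 0" by (simp add: w_def)
  have R: "ACi (\<lambda>s. Rot (sg * w s) ** csmult (of_real (sg * u2 s)) E3) (\<lambda>s. Rot (sg * w s))"
    by (rule Rot_ACi[OF Aw w0])
  have P: "ACi (\<lambda>s. (\<gamma> s ** Mf E1 (X2a a) E2 u1 u2 u3 s) ** Rot (sg * w s)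
                   + \<gamma> s ** (Rot (sg * w s) ** csmult (of_real (sg * u2 s)) E3))
              (\<lambda>s. \<gamma> s ** Rot (sg * w s))"
    by (rule ACi_prod[OF bilinear_mm A R])
  define v1 where "v1 s = u1 s * cos (sg * w s) + u3 s * sin (sg * w s)" for s
  define v3 where "v3 s = u3 s * cos (sg * w s) - u1 s * sin (sg * w s)" for s
  have P2: "ACi (\<lambda>s. (\<gamma> s ** Rot (sg * w s)) ** Mf E1 (X2a (a - sg)) E2 v1 u2 v3 s) (\<lambda>s. \<gamma> s ** Rot (sg * w s))"
  proof (rule ACi_cong[OF P])
    fix s :: real
    have "(\<gamma> s ** Mf E1 (X2a a) E2 u1 u2 u3 s) ** Rot (sg * w s)
                   + \<gamma> s ** (Rot (sg * w s) ** csmult (of_real (sg * u2 s)) E3)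
        = \<gamma> s ** (Mf E1 (X2a a) E2 u1 u2 u3 s ** Rot (sg * w s) + Rot (sg * w s) ** csmult (of_real (sg * u2 s)) E3)"
      by (simp add: matrix_mul_assoc matrix_add_ldistrib)
    also have "Mf E1 (X2a a) E2 u1 u2 u3 s ** Rot (sg * w s) + Rot (sg * w s) ** csmult (of_real (sg * u2 s)) E3
       = Rot (sg * w s) ** Mf E1 (X2a (a - sg)) E2 v1 u2 v3 s"
      unfolding Mf_def v1_def v3_def by (rule key_identity)
    finally show "(\<gamma> s ** Mf E1 (X2a a) E2 u1 u2 u3 s) ** Rot (sg * w s)
                   + \<gamma> s ** (Rot (sg * w s) ** csmult (of_real (sg * u2 s)) E3)
       = (\<gamma> s ** Rot (sg * w s)) ** Mf E1 (X2a (a - sg)) E2 v1 u2 v3 s"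
      by (simp add: matrix_mul_assoc)
  qed simp
  have cw: "continuous_on {0..1} w" by (rule ACi_cont[OF Aw])
  have cc: "continuous_on {0..1} (\<lambda>s. cos (sg * w s))" by (intro continuous_intros cw)
  have cs: "continuous_on {0..1} (\<lambda>s. sin (sg * w s))" by (intro continuous_intros cw)
  have prod: "(\<lambda>s. f s * u s) absolutely_integrable_on {0..1}"
    if "continuous_on {0..1} f" "u absolutely_integrable_on {0..1}" for f u :: "real \<Rightarrow> real"
  proof -
    have m: "f \<in> borel_measurable (lebesgue_on {0..1})"
      by (rule continuous_imp_measurable_on_sets_lebesgue[OF that(1)]) auto
    have b: "bounded (f ` {0..1})"
      by (rule compact_imp_bounded[OF compact_continuous_image[OF that(1)]]) simp
    show ?thesis by (rule absolutely_integrable_bounded_measurable_product_real[OF m _ b that(2)]) auto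
  qed
  have v1: "v1 absolutely_integrable_on {0..1}"
    using set_integral_add(1)[OF prod[OF cc u1] prod[OF cs u3]] unfolding v1_def[abs_def]
    by (simp add: mult.commute)
  have v3: "v3 absolutely_integrable_on {0..1}"
    using set_integral_diff(1)[OF prod[OF cc u3] prod[OF cs u1]] unfolding v3_def[abs_def]
    by (simp add: mult.commute)
  show ?thesis
    using v1 u2 v3 P2 unfolding horizontal_ACi v1_def[abs_def] v3_def[abs_def] by blast
qed

lemma grp_Rot: "grp A B v ** Rot th = grp (A * exp (\<i> * of_real (th/2))) (B * exp (- \<i> * of_real (th/2))) v"
  by (simp add: grp_blk Rot_def blk_mult exp_cnj)

lemma Rot0: "Rot 0 = Idm"
  by (simp add: Rot_def Idm_blk)

lemma Idm_mult: "Idm ** M = M"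
  by (simp add: Idm_def)

lemma transform_full:
  assumes H: "horizontal E1 (X2a a) E2 \<gamma> u1 u2 u3" and g0: "\<gamma> 0 = Idm" and g1: "\<gamma> 1 = grp A B v"
  shows "sr_length u1 u2 u3 \<in> {sr_length u1 u2 u3 | \<gamma> u1 u2 u3. horizontal E1 (X2a (a - sg)) E2 \<gamma> u1 u2 u3 \<and>
      \<gamma> 0 = Idm \<and> \<gamma> 1 = grp (A * exp (\<i> * of_real (sg * v/2))) (B * exp (- \<i> * of_real (sg * v/2))) v}"
proof -
  define w where "w s = integral {0..s} u2" for s
  have Ht: "horizontal E1 (X2a (a - sg)) E2 (\<lambda>s. \<gamma> s ** Rot (sg * w s))
           (\<lambda>s. u1 s * cos (sg * w s) + u3 s * sin (sg * w s)) u2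
           (\<lambda>s. u3 s * cos (sg * w s) - u1 s * sin (sg * w s))"
    unfolding w_def by (rule transform[OF H g0])
  have "\<gamma> 1 $ 3 $ 3 = of_real (exp (w 1))" unfolding w_def by (rule gamma33[OF H g0]) simp
  then have "exp v = exp (w 1)" using g1 by (simp add: grp_blk)
  then have w1: "w 1 = v" by simp
  have e0: "\<gamma> 0 ** Rot (sg * w 0) = Idm" by (simp add: g0 w_def Rot0 Idm_mult)
  have e1: "\<gamma> 1 ** Rot (sg * w 1) = grp (A * exp (\<i> * of_real (sg * v/2))) (B * exp (- \<i> * of_real (sg * v/2))) v"
    by (simp add: g1 w1 grp_Rot)
  have len: "sr_length (\<lambda>s. u1 s * cos (sg * w s) + u3 s * sin (sg * w s)) u2
           (\<lambda>s. u3 s * cos (sg * w s) - u1 s * sin (sg * w s)) = sr_length u1 u2 u3"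
    by (rule sr_length_rot)
  show ?thesis
    apply (simp only: mem_Collect_eq)
    apply (rule exI[where x="\<lambda>s. \<gamma> s ** Rot (sg * w s)"])
    apply (rule exI[where x="\<lambda>s. u1 s * cos (sg * w s) + u3 s * sin (sg * w s)"])
    apply (rule exI[where x=u2])
    apply (rule exI[where x="\<lambda>s. u3 s * cos (sg * w s) - u1 s * sin (sg * w s)"])
    using Ht e0 e1 len by simp
qed

theorem proposition8:
  fixes A B :: complex and v :: real
  assumes "(cmod A)\<^sup>2 + (cmod B)\<^sup>2 = 1"
  shows "d1 Idm (grp A B v) = d2 Idm (grp (A * exp (\<i> * of_real (v/2))) (B * exp (- \<i> * of_real (v/2))) v)"
proof -
  define A' where "A' = A * exp (\<i> * of_real (v/2))"
  define B' where "B' = B * exp (- \<i> * of_real (v/2))"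
  let ?S1 = "{sr_length u1 u2 u3 | \<gamma> u1 u2 u3. horizontal E1 (X2a 1) E2 \<gamma> u1 u2 u3 \<and> \<gamma> 0 = Idm \<and> \<gamma> 1 = grp A B v}"
  let ?S2 = "{sr_length u1 u2 u3 | \<gamma> u1 u2 u3. horizontal E1 (X2a 0) E2 \<gamma> u1 u2 u3 \<and> \<gamma> 0 = Idm \<and> \<gamma> 1 = grp A' B' v}"
  have AA: "A' * exp (\<i> * of_real (- 1 * v / 2)) = A"
  proof -
    have "exp (\<i> * complex_of_real (v / 2)) * exp (\<i> * complex_of_real (- 1 * v / 2)) = 1"
      by (simp add: exp_add[symmetric] algebra_simps)
    then show ?thesis by (simp add: A'_def mult.assoc)
  qed
  have BB: "B' * exp (- \<i> * of_real (- 1 * v / 2)) = B"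
  proof -
    have "exp (- \<i> * complex_of_real (v / 2)) * exp (- \<i> * complex_of_real (- 1 * v / 2)) = 1"
      by (simp add: exp_add[symmetric] algebra_simps)
    then show ?thesis by (simp add: B'_def mult.assoc)
  qed
  have "?S1 \<subseteq> ?S2"
  proof
    fix x assume "x \<in> ?S1"
    then obtain \<gamma> u1 u2 u3 where H: "horizontal E1 (X2a 1) E2 \<gamma> u1 u2 u3" "\<gamma> 0 = Idm" "\<gamma> 1 = grp A B v"
      and x: "x = sr_length u1 u2 u3" by blast
    from transform_full[OF H, of 1] show "x \<in> ?S2" by (simp add: x A'_def B'_def)
  qed
  moreover have "?S2 \<subseteq> ?S1"
  proof
    fix x assume "x \<in> ?S2"
    then obtain \<gamma> u1 u2 u3 where H: "horizontal E1 (X2a 0) E2 \<gamma> u1 u2 u3" "\<gamma> 0 = Idm" "\<gamma> 1 = grp A' B' v"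
      and x: "x = sr_length u1 u2 u3" by blast
    from transform_full[OF H, of "-1"] show "x \<in> ?S1" by (simp only: x AA BB) simp
  qed
  ultimately have "?S1 = ?S2" by blast
  then show ?thesis
    unfolding d1_def d2_def sr_dist_def X2a_E(1) unfolding X2a_E(2) A'_def B'_def by simp
qed
end
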